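(* Let $n\ge 2$ and let $\mathcal{A}=\langle Q,\Sigma,\delta\rangle$ be an $n$-state DFA that has a letter of rank $n-1$ and such that the group $P$ generated by the permutation letters of $\Sigma$ acts $2$-transitively on $Q$. Then $\mathcal{A}$ is synchronizing and its reset threshold is at most $2n^2-6n+5$.
   Context: Words act on states letter by letter from left to right. A letter $x$ has rank $n-1$ if $|Q\cdot x|=n-1$; a permutation letter is one acting bijectively on $Q$. A permutation group $P$ on $Q$ is 2-transitive if it acts transitively on ordered pairs of distinct elements of $Q$. The reset threshold is the minimum length of a word $w$ with $|Q\cdot w|=1$. *)

theory Defs
  imports "HOL-Library.FuncSet"
begin

definition dfa :: "'q set \<Rightarrow> 'a set \<Rightarrow> ('q \<Rightarrow> 'a \<Rightarrow> 'q) \<Rightarrow> bool" where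
  "dfa Q Sig delta \<longleftrightarrow> finite Q \<and> Q \<noteq> {} \<and> finite Sig \<and>
     (\<forall>q\<in>Q. \<forall>x\<in>Sig. delta q x \<in> Q)"

definition delta_word :: "('q \<Rightarrow> 'a \<Rightarrow> 'q) \<Rightarrow> 'q \<Rightarrow> 'a list \<Rightarrow> 'q" where
  "delta_word delta q w = foldl delta q w"

definition image_word :: "('q \<Rightarrow> 'a \<Rightarrow> 'q) \<Rightarrow> 'q set \<Rightarrow> 'a list \<Rightarrow> 'q set" where
  "image_word delta S w = (\<lambda>q. delta_word delta q w) ` S"

definition letter_rank :: "'q set \<Rightarrow> ('q \<Rightarrow> 'a \<Rightarrow> 'q) \<Rightarrow> 'a \<Rightarrow> nat" where
  "letter_rank Q delta x = card ((\<lambda>q. delta q x) ` Q)"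

definition permutation_letter :: "'q set \<Rightarrow> ('q \<Rightarrow> 'a \<Rightarrow> 'q) \<Rightarrow> 'a \<Rightarrow> bool" where
  "permutation_letter Q delta x \<longleftrightarrow> bij_betw (\<lambda>q. delta q x) Q Q"

text \<open>The permutation group on Q generated by the permutation letters; permutations
are represented as extensional functions on Q (value undefined outside Q).\<close>
inductive_set perm_group_gen :: "'q set \<Rightarrow> 'a set \<Rightarrow> ('q \<Rightarrow> 'a \<Rightarrow> 'q) \<Rightarrow> ('q \<Rightarrow> 'q) set"
  for Q Sig delta where
  gen_id: "restrict id Q \<in> perm_group_gen Q Sig delta"
| gen_mult: "\<lbrakk> g \<in> perm_group_gen Q Sig delta; x \<in> Sig; permutation_letter Q delta x \<rbrakk>
     \<Longrightarrow> restrict (\<lambda>q. delta (g q) x) Q \<in> perm_group_gen Q Sig delta"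
| gen_inv: "\<lbrakk> g \<in> perm_group_gen Q Sig delta; x \<in> Sig; permutation_letter Q delta x \<rbrakk>
     \<Longrightarrow> restrict (\<lambda>q. the_inv_into Q (\<lambda>p. delta p x) (g q)) Q \<in> perm_group_gen Q Sig delta"

definition two_transitive :: "'q set \<Rightarrow> ('q \<Rightarrow> 'q) set \<Rightarrow> bool" where
  "two_transitive Q P \<longleftrightarrow>
     (\<forall>p\<in>Q. \<forall>q\<in>Q. \<forall>p'\<in>Q. \<forall>q'\<in>Q. p \<noteq> q \<longrightarrow> p' \<noteq> q' \<longrightarrow>
        (\<exists>g\<in>P. g p = p' \<and> g q = q'))"

definition synchronizing :: "'q set \<Rightarrow> 'a set \<Rightarrow> ('q \<Rightarrow> 'a \<Rightarrow> 'q) \<Rightarrow> bool" where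
  "synchronizing Q Sig delta \<longleftrightarrow> (\<exists>w. set w \<subseteq> Sig \<and> card (image_word delta Q w) = 1)"

definition reset_threshold :: "'q set \<Rightarrow> 'a set \<Rightarrow> ('q \<Rightarrow> 'a \<Rightarrow> 'q) \<Rightarrow> nat" where
  "reset_threshold Q Sig delta =
     (LEAST l. \<exists>w. set w \<subseteq> Sig \<and> length w = l \<and> card (image_word delta Q w) = 1)"

end

theory Submission
  imports Defs
begin

lemma dw_Nil[simp]: "delta_word delta r [] = r" by (simp add: delta_word_def)
lemma dw_Cons[simp]: "delta_word delta r (s#h) = delta_word delta (delta r s) h" by (simp add: delta_word_def)
lemma dw_append: "delta_word delta r (u@v) = delta_word delta (delta_word delta r u) v"
  by (simp add: delta_word_def)
lemma dw_snoc: "delta_word delta r (h@[s]) = delta (delta_word delta r h) s"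
  by (simp add: delta_word_def)

lemma quot_card_less:
  assumes fin: "finite A" and e: "equiv A r" and e': "equiv A r'" and sub: "r \<subseteq> r'" and ne: "r \<noteq> r'"
  shows "card (A//r') < card (A//r)"
proof -
  define F where "F = (\<lambda>C. r' `` C)"
  have img0: "F (r``{a}) = r'``{a}" if "a \<in> A" for a
  proof
    show "F (r``{a}) \<subseteq> r'``{a}" unfolding F_def using sub e' that
      by (auto simp: equiv_def trans_def)
    show "r'``{a} \<subseteq> F (r``{a})" unfolding F_def using e that
      by (auto simp: equiv_def refl_on_def)
  qed
  have img: "F ` (A//r) = A//r'" using img0 unfolding quotient_def by auto
  obtain a b where ab: "(a,b) \<in> r'" "(a,b) \<notin> r" using sub ne by auto
  have abA: "a \<in> A" "b \<in> A" using ab e' by (auto simp: equiv_def refl_on_def)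
  have "r``{a} \<noteq> r``{b}" using ab abA e by (metis eq_equiv_class_iff)
  moreover have "F (r``{a}) = F (r``{b})"
  proof -
    have "F (r``{a}) = r'``{a}" "F (r``{b}) = r'``{b}" using img0 abA by auto
    moreover have "r'``{a} = r'``{b}" using ab(1) e' abA by (metis eq_equiv_class_iff)
    ultimately show ?thesis by simp
  qed
  moreover have "r``{a} \<in> A//r" "r``{b} \<in> A//r" using abA by (auto intro: quotientI)
  ultimately have "\<not> inj_on F (A//r)" unfolding inj_on_def by blast
  moreover have "finite (A//r)" using fin e by (simp add: finite_quotient equiv_def)
  ultimately have "card (F ` (A//r)) < card (A//r)"
    by (metis card_image_le inj_on_iff_eq_card le_neq_implies_less)
  then show ?thesis using img by simp
qed

lemma quot_Id: "finite A \<Longrightarrow> card (A // Id_on A) = card A"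
proof -
  have "A // Id_on A = (\<lambda>a. {a}) ` A" unfolding quotient_def by auto
  moreover have "inj_on (\<lambda>a. {a}) A" by (auto simp: inj_on_def)
  ultimately show "card (A // Id_on A) = card A" by (simp add: card_image)
qed

lemma quot_one:
  assumes "finite A" "equiv A r" "card (A//r) \<le> 1" "a \<in> A" "b \<in> A"
  shows "(a,b) \<in> r"
proof -
  have "finite (A//r)" using assms by (simp add: finite_quotient equiv_def)
  moreover have "r``{a} \<in> A//r" "r``{b} \<in> A//r" using assms by (auto intro: quotientI)
  ultimately have "r``{a} = r``{b}" using assms(3) by (metis One_nat_def card_le_Suc0_iff_eq)
  then show ?thesis using assms by (metis eq_equiv_class_iff)
qed

lemma crossing:
  assumes "(s,t) \<in> R\<^sup>*" "s \<notin> T" "t \<in> T" shows "\<exists>u v. (u,v) \<in> R \<and> u \<notin> T \<and> v \<in> T"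
  using assms by (induction rule: rtrancl_induct) auto


locale L =
  fixes Q :: "'q set" and Sig :: "'a set" and delta :: "'q \<Rightarrow> 'a \<Rightarrow> 'q" and x y :: 'q
  assumes finQ: "finite Q" and cl: "\<And>r s. r \<in> Q \<Longrightarrow> s \<in> Sig \<Longrightarrow> delta r s \<in> Q"
    and tt: "two_transitive Q (perm_group_gen Q Sig delta)"
    and two: "2 \<le> card Q"
    and xQ: "x \<in> Q" and yQ: "y \<in> Q" and xy: "x \<noteq> y"
begin

definition "PL = {s\<in>Sig. permutation_letter Q delta s}"
definition "W m = {h. set h \<subseteq> PL \<and> length h \<le> m}"
definition "E m = (\<lambda>h. (delta_word delta y h, delta_word delta x h)) ` W m"
definition "Rel m = {(r,s). r\<in>Q \<and> s\<in>Q \<and> (r,s)\<in>(E m)\<^sup>* \<and> (s,r)\<in>(E m)\<^sup>*}"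
definition "X m = (\<lambda>h. delta_word delta x h) ` W m"

lemma PL_Sig: "PL \<subseteq> Sig" unfolding PL_def by auto

lemma dw_in: "r \<in> Q \<Longrightarrow> set h \<subseteq> Sig \<Longrightarrow> delta_word delta r h \<in> Q"
  by (induction h arbitrary: r) (auto simp: cl)

lemma dw_bij: "set h \<subseteq> PL \<Longrightarrow> bij_betw (\<lambda>r. delta_word delta r h) Q Q"
proof (induction h)
  case Nil then show ?case by (simp add: bij_betw_id[unfolded id_def])
next
  case (Cons s h)
  have "bij_betw (\<lambda>r. delta r s) Q Q" using Cons.prems unfolding PL_def permutation_letter_def by auto
  then have "bij_betw ((\<lambda>r. delta_word delta r h) \<circ> (\<lambda>r. delta r s)) Q Q"
    using Cons by (auto intro: bij_betw_trans)
  then show ?case by (simp add: o_def)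
qed

lemma W_mono: "m \<le> m' \<Longrightarrow> W m \<subseteq> W m'" unfolding W_def by auto

lemma W_sig: "h \<in> W m \<Longrightarrow> set h \<subseteq> Sig" unfolding W_def using PL_Sig by auto

lemma pair_closed:
  assumes R: "R \<subseteq> Q \<times> Q"
    and clR: "\<And>s r t. s \<in> PL \<Longrightarrow> (r,t) \<in> R \<Longrightarrow> (delta r s, delta t s) \<in> R"
    and g: "g \<in> perm_group_gen Q Sig delta"
  shows "\<forall>(r,t)\<in>R. (g r, g t) \<in> R"
proof -
  have inv: "(r,t) \<in> R" if s: "s \<in> PL" and rt: "r \<in> Q" "t \<in> Q" and in1: "(delta r s, delta t s) \<in> R" for s r t
  proof -
    define F where "F = (\<lambda>(r,t). (delta r s, delta t s))"
    have bij: "bij_betw (\<lambda>r. delta r s) Q Q" using s unfolding PL_def permutation_letter_def by auto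
    then have injf: "inj_on (\<lambda>r. delta r s) Q" by (simp add: bij_betw_def)
    have injF: "inj_on F (Q\<times>Q)" unfolding F_def inj_on_def using injf by (auto simp: inj_on_def)
    have finR: "finite R" using R finQ by (meson finite_SigmaI finite_subset)
    have FR: "F ` R \<subseteq> R" unfolding F_def using clR s by auto
    have "card (F ` R) = card R" using injF R by (meson card_image inj_on_subset)
    then have FR2: "F ` R = R" using FR finR by (simp add: card_subset_eq)
    then obtain r' t' where "(r',t') \<in> R" "F (r',t') = (delta r s, delta t s)" using in1
      by (metis imageE prod.exhaust)
    moreover have "(r',t') \<in> Q\<times>Q" using R calculation by auto
    moreover have "(r,t) \<in> Q\<times>Q" using rt by auto
    ultimately have "(r',t') = (r,t)" using injF unfolding F_def inj_on_def by auto
    then show ?thesis using \<open>(r',t') \<in> R\<close> by simp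
  qed
  from g show ?thesis
  proof induct
    case gen_id
    then show ?case using R by auto
  next
    case (gen_mult g s)
    have sP: "s \<in> PL" using gen_mult unfolding PL_def by auto
    show ?case
    proof (clarify)
      fix r t assume rt: "(r,t) \<in> R"
      then have "r \<in> Q" "t \<in> Q" using R by auto
      moreover have "(g r, g t) \<in> R" using gen_mult rt by auto
      ultimately show "(restrict (\<lambda>q. delta (g q) s) Q r, restrict (\<lambda>q. delta (g q) s) Q t) \<in> R"
        using clR[OF sP] by auto
    qed
  next
    case (gen_inv g s)
    have sP: "s \<in> PL" using gen_inv unfolding PL_def by auto
    have bij: "bij_betw (\<lambda>r. delta r s) Q Q" using sP unfolding PL_def permutation_letter_def by auto
    show ?case
    proof (clarify)
      fix r t assume rt: "(r,t) \<in> R"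
      then have rQ: "r \<in> Q" "t \<in> Q" using R by auto
      have grt: "(g r, g t) \<in> R" using gen_inv rt by auto
      then have gQ: "g r \<in> Q" "g t \<in> Q" using R by auto
      define u where "u = the_inv_into Q (\<lambda>p. delta p s) (g r)"
      define v where "v = the_inv_into Q (\<lambda>p. delta p s) (g t)"
      have uv: "u \<in> Q" "v \<in> Q" "delta u s = g r" "delta v s = g t"
        unfolding u_def v_def using bij gQ
        by (auto simp: bij_betw_def the_inv_into_into intro!: f_the_inv_into_f[where f="\<lambda>p. delta p s"])
      have "(u,v) \<in> R" using inv[OF sP uv(1,2)] uv grt by simp
      then show "(restrict (\<lambda>q. the_inv_into Q (\<lambda>p. delta p s) (g q)) Q r,
                  restrict (\<lambda>q. the_inv_into Q (\<lambda>p. delta p s) (g q)) Q t) \<in> R"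
        using rQ unfolding u_def v_def by simp
    qed
  qed
qed

lemma full_off:
  assumes R: "R \<subseteq> Q \<times> Q"
    and clR: "\<And>s r t. s \<in> PL \<Longrightarrow> (r,t) \<in> R \<Longrightarrow> (delta r s, delta t s) \<in> R"
    and r0: "(r0,t0) \<in> R" "r0 \<noteq> t0" and r't': "r' \<in> Q" "t' \<in> Q" "r' \<noteq> t'"
  shows "(r',t') \<in> R"
proof -
  have "r0 \<in> Q" "t0 \<in> Q" using r0 R by auto
  then obtain g where "g \<in> perm_group_gen Q Sig delta" "g r0 = r'" "g t0 = t'"
    using tt r0 r't' unfolding two_transitive_def by metis
  then show ?thesis using pair_closed[OF R clR] r0 by fastforce
qed

lemma transitive:
  assumes "r \<in> Q" "r' \<in> Q" shows "\<exists>g\<in>perm_group_gen Q Sig delta. g r = r'"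
proof -
  have "card (Q - {r}) \<ge> 1" using two assms finQ by (simp add: card_Diff_singleton)
  then obtain u where u: "u \<in> Q" "u \<noteq> r" by (metis Diff_iff One_nat_def card_0_eq finQ finite_Diff insertI1 not_one_le_zero  ex_in_conv)
  have "card (Q - {r'}) \<ge> 1" using two assms finQ by (simp add: card_Diff_singleton)
  then obtain u' where u': "u' \<in> Q" "u' \<noteq> r'" by (metis Diff_iff One_nat_def card_0_eq finQ finite_Diff insertI1 not_one_le_zero  ex_in_conv)
  show ?thesis using tt assms u u' unfolding two_transitive_def by metis
qed

end

context L begin

lemma X_sub: "X m \<subseteq> Q" unfolding X_def using dw_in xQ W_sig by auto

lemma W0: "W 0 = {[]}" unfolding W_def by auto

lemma snoc_W: "h \<in> W m \<Longrightarrow> s \<in> PL \<Longrightarrow> h @ [s] \<in> W (Suc m)" unfolding W_def by auto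

lemma X_grow: "X m = Q \<or> m + 1 \<le> card (X m)"
proof (induction m)
  case 0
  then show ?case unfolding X_def W0 by simp
next
  case (Suc m)
  have sub: "X m \<subseteq> X (Suc m)" unfolding X_def using W_mono[of m "Suc m"] by auto
  show ?case
  proof (cases "X m = Q")
    case True then show ?thesis using sub X_sub[of "Suc m"] by auto
  next
    case False
    with Suc have c: "m + 1 \<le> card (X m)" by simp
    have "X (Suc m) \<noteq> X m"
    proof
      assume eq: "X (Suc m) = X m"
      have clX: "delta r s \<in> X m" if "s \<in> PL" "r \<in> X m" for s r
      proof -
        obtain h where h: "h \<in> W m" "r = delta_word delta x h" using \<open>r \<in> X m\<close> unfolding X_def by auto
        have "delta r s = delta_word delta x (h @ [s])" using h by (simp add: dw_snoc)
        then have "delta r s \<in> X (Suc m)" unfolding X_def using snoc_W[OF h(1) that(1)] by auto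
        then show ?thesis using eq by simp
      qed
      have xX: "x \<in> X m" unfolding X_def W_def by (auto intro: image_eqI[where x="[]"])
      have "Q \<subseteq> X m"
      proof
        fix p' assume "p' \<in> Q"
        then obtain g where g: "g \<in> perm_group_gen Q Sig delta" "g x = p'" using transitive xQ by blast
        have "\<forall>(r,t)\<in>X m \<times> X m. (g r, g t) \<in> X m \<times> X m"
          by (rule pair_closed[OF _ _ g(1)]) (use X_sub clX in auto)
        then show "p' \<in> X m" using xX g(2) by auto
      qed
      then show False using False X_sub by auto
    qed
    then have "X m \<subset> X (Suc m)" using sub by auto
    then have "card (X m) < card (X (Suc m))"
      using X_sub finQ by (meson finite_subset psubset_card_mono)
    then show ?thesis using c by simp
  qed
qed

lemma X_full: "X (card Q - 1) = Q"
proof -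
  have "X (card Q - 1) = Q \<or> card Q \<le> card (X (card Q - 1))" using X_grow[of "card Q - 1"] two by simp
  then show ?thesis using X_sub finQ by (meson card_seteq)
qed

lemma E_sub: "E m \<subseteq> Q \<times> Q" unfolding E_def using dw_in xQ yQ W_sig by auto

lemma E_noloop: "(u,v) \<in> E m \<Longrightarrow> u \<noteq> v"
proof -
  assume "(u,v) \<in> E m"
  then obtain h where h: "h \<in> W m" "u = delta_word delta y h" "v = delta_word delta x h" unfolding E_def by auto
  have "inj_on (\<lambda>r. delta_word delta r h) Q" using dw_bij h(1) unfolding W_def bij_betw_def by auto
  then show "u \<noteq> v" using h xy xQ yQ unfolding inj_on_def by metis
qed

lemma E_mono: "m \<le> m' \<Longrightarrow> E m \<subseteq> E m'" unfolding E_def using W_mono by auto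

lemma Rel_mono: "m \<le> m' \<Longrightarrow> Rel m \<subseteq> Rel m'"
  unfolding Rel_def using rtrancl_mono[OF E_mono] by blast

lemma Rel_equiv: "equiv Q (Rel m)"
  unfolding equiv_def refl_on_def sym_def trans_def Rel_def by (auto intro: rtrancl_trans)

lemma cycle: "\<exists>r s. r \<noteq> s \<and> (r,s) \<in> Rel (card Q - 1)"
proof -
  define n where "n = card Q"
  define EE where "EE = E (n - 1)"
  have "\<forall>r\<in>Q. \<exists>u\<in>Q. (u,r) \<in> EE"
  proof
    fix r assume "r \<in> Q"
    then obtain h where h: "h \<in> W (n-1)" "r = delta_word delta x h" using X_full unfolding X_def n_def by blast
    then have "(delta_word delta y h, r) \<in> EE" unfolding EE_def E_def by auto
    moreover have "delta_word delta y h \<in> Q" using dw_in yQ W_sig h by auto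
    ultimately show "\<exists>u\<in>Q. (u,r) \<in> EE" by blast
  qed
  then obtain pr where pr: "\<And>r. r \<in> Q \<Longrightarrow> pr r \<in> Q \<and> (pr r, r) \<in> EE" by metis
  obtain r0 where r0: "r0 \<in> Q" using xQ by blast
  define sq where "sq k = (pr ^^ k) r0" for k
  have sqQ: "sq k \<in> Q" for k by (induction k) (auto simp: sq_def r0 pr)
  have sqE: "(sq (Suc k), sq k) \<in> EE" for k using pr[OF sqQ[of k]] by (simp add: sq_def)
  have "\<not> inj_on sq {0..n}"
  proof
    assume "inj_on sq {0..n}"
    then have "card {0..n} \<le> card Q" using sqQ finQ by (meson card_inj_on_le image_subsetI)
    then show False unfolding n_def by simp
  qed
  then obtain i j where ij: "i < j" "sq i = sq j"
    unfolding inj_on_def by (metis atLeastAtMost_iff linorder_neqE_nat)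
  have path: "(sq k, sq i') \<in> EE\<^sup>*" if "i' \<le> k" for k i'
    using that
  proof (induction k rule: dec_induct)
    case base then show ?case by simp
  next
    case (step k) then show ?case using sqE[of k] by (meson converse_rtrancl_into_rtrancl)
  qed
  have 1: "(sq (Suc i), sq i) \<in> EE\<^sup>*" using sqE by auto
  have 2: "(sq i, sq (Suc i)) \<in> EE\<^sup>*" using path[of "Suc i" j] ij by simp
  have 3: "sq (Suc i) \<noteq> sq i" using E_noloop sqE unfolding EE_def by blast
  show ?thesis using 1 2 3 sqQ unfolding Rel_def EE_def n_def by blast
qed

end

context L begin

lemma E_step:
  assumes s: "s \<in> PL" and uv: "(u,v) \<in> (E m)\<^sup>*"
  shows "(delta u s, delta v s) \<in> (E (Suc m))\<^sup>*"
  using uv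
proof (induction rule: rtrancl_induct)
  case base then show ?case by simp
next
  case (step v w)
  then obtain h where h: "h \<in> W m" "v = delta_word delta y h" "w = delta_word delta x h" unfolding E_def by auto
  have "(delta v s, delta w s) \<in> E (Suc m)" unfolding E_def
    using h snoc_W[OF h(1) s] by (auto simp: dw_snoc intro!: image_eqI[where x="h@[s]"])
  then show ?case using step by (meson rtrancl_into_rtrancl)
qed

lemma Rel_stuck:
  assumes eq: "Rel (Suc m) = Rel m" and r0: "(r0,t0) \<in> Rel m" "r0 \<noteq> t0"
  shows "Rel m = Q \<times> Q"
proof -
  have sub: "Rel m \<subseteq> Q \<times> Q" unfolding Rel_def by auto
  have clR: "(delta r s, delta t s) \<in> Rel m" if "s \<in> PL" "(r,t) \<in> Rel m" for s r t
  proof -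
    have rt: "r \<in> Q" "t \<in> Q" "(r,t) \<in> (E m)\<^sup>*" "(t,r) \<in> (E m)\<^sup>*" using that(2) unfolding Rel_def by auto
    have "delta r s \<in> Q" "delta t s \<in> Q" using rt cl PL_Sig that(1) by auto
    moreover have "(delta r s, delta t s) \<in> (E (Suc m))\<^sup>*" "(delta t s, delta r s) \<in> (E (Suc m))\<^sup>*"
      using E_step[OF that(1) rt(3)] E_step[OF that(1) rt(4)] by auto
    ultimately have "(delta r s, delta t s) \<in> Rel (Suc m)" unfolding Rel_def by blast
    then show ?thesis using eq by simp
  qed
  have "(r',t') \<in> Rel m" if "r' \<in> Q" "t' \<in> Q" for r' t'
  proof (cases "r' = t'")
    case True then show ?thesis using that unfolding Rel_def by blast
  next
    case False then show ?thesis using full_off[OF sub clR r0 that False] by blast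
  qed
  then show ?thesis using sub by blast
qed

lemma strong: "Rel (2 * card Q - 3) = Q \<times> Q"
proof -
  define n where "n = card Q"
  define m1 where "m1 = n - 1"
  obtain r0 t0 where r0: "r0 \<noteq> t0" "(r0,t0) \<in> Rel m1" using cycle unfolding m1_def n_def by blast
  have sub: "Rel k \<subseteq> Q \<times> Q" for k unfolding Rel_def by auto
  have IdR: "Id_on Q \<subseteq> Rel k" for k unfolding Rel_def by auto
  have eqId: "equiv Q (Id_on Q)" by (auto simp: equiv_def refl_on_def sym_def trans_def)
  have base: "card (Q // Rel m1) < n"
  proof -
    have "Id_on Q \<noteq> Rel m1" using r0 by (metis Id_onE prod.inject)
    then have "card (Q // Rel m1) < card (Q // Id_on Q)"
      by (rule quot_card_less[OF finQ eqId Rel_equiv IdR])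
    then show ?thesis using quot_Id[OF finQ] n_def by simp
  qed
  have claim: "Rel (m1 + k) = Q \<times> Q \<or> card (Q // Rel (m1 + k)) + k < n" for k
  proof (induction k)
    case 0 then show ?case using base by simp
  next
    case (Suc k)
    show ?case
    proof (cases "Rel (m1 + k) = Q \<times> Q")
      case True
      have "Rel (m1 + k) \<subseteq> Rel (m1 + Suc k)" by (rule Rel_mono) simp
      then have "Rel (m1 + Suc k) = Q \<times> Q" using True sub[of "m1 + Suc k"] by blast
      then show ?thesis by blast
    next
      case False
      with Suc.IH have c: "card (Q // Rel (m1 + k)) + k < n" by simp
      have r0k: "(r0,t0) \<in> Rel (m1+k)" using Rel_mono[of m1 "m1+k"] r0 by auto
      have ne: "Rel (m1 + k) \<noteq> Rel (m1 + Suc k)"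
      proof
        assume "Rel (m1 + k) = Rel (m1 + Suc k)"
        then have "Rel (Suc (m1 + k)) = Rel (m1 + k)" by simp
        then show False using Rel_stuck[of "m1+k" r0 t0] r0k r0 False by blast
      qed
      have "card (Q // Rel (m1 + Suc k)) < card (Q // Rel (m1 + k))"
        by (rule quot_card_less[OF finQ Rel_equiv Rel_equiv Rel_mono ne]) simp
      then show ?thesis using c by simp
    qed
  qed
  have idx: "m1 + (n - 2) = 2 * card Q - 3" using two unfolding m1_def n_def by simp
  from claim[of "n-2"] show ?thesis
  proof
    assume "card (Q // Rel (m1 + (n - 2))) + (n - 2) < n"
    then have "card (Q // Rel (m1 + (n - 2))) \<le> 1" by simp
    then have "(a,b) \<in> Rel (m1 + (n-2))" if "a \<in> Q" "b \<in> Q" for a b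
      using quot_one[OF finQ Rel_equiv] that by blast
    then show ?thesis using sub idx by auto
  qed (use idx in simp)
qed

lemma cross:
  assumes T: "T \<subseteq> Q" "T \<noteq> {}" "T \<noteq> Q"
  shows "\<exists>h \<in> W (2 * card Q - 3). delta_word delta x h \<in> T \<and> delta_word delta y h \<notin> T"
proof -
  obtain t where t: "t \<in> T" using T by blast
  obtain s where s: "s \<in> Q" "s \<notin> T" using T by blast
  have "(s,t) \<in> Q \<times> Q" using s t T by blast
  then have "(s,t) \<in> Rel (2 * card Q - 3)" using strong by simp
  then have "(s,t) \<in> (E (2 * card Q - 3))\<^sup>*" unfolding Rel_def by blast
  then obtain u v where uv: "(u,v) \<in> E (2 * card Q - 3)" "u \<notin> T" "v \<in> T" using crossing[OF _ s(2) t] by blast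
  then obtain h where "h \<in> W (2 * card Q - 3)" "u = delta_word delta y h" "v = delta_word delta x h"
    using uv(1) unfolding E_def by (auto simp: image_iff)
  then show ?thesis using uv by blast
qed

end

theorem mainTheorem8:
  fixes Q :: "'q set" and Sig :: "'a set" and delta :: "'q \<Rightarrow> 'a \<Rightarrow> 'q" and n :: nat
  assumes "dfa Q Sig delta"
    and "card Q = n" and "n \<ge> 2"
    and "\<exists>x\<in>Sig. letter_rank Q delta x = n - 1"
    and "two_transitive Q (perm_group_gen Q Sig delta)"
  shows "synchronizing Q Sig delta \<and>
         reset_threshold Q Sig delta \<le> 2 * n ^ 2 + 5 - 6 * n"
proof -
  have finQ: "finite Q" and cl: "\<And>r s. r \<in> Q \<Longrightarrow> s \<in> Sig \<Longrightarrow> delta r s \<in> Q"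
    using assms(1) unfolding dfa_def by auto
  obtain a where a: "a \<in> Sig" "letter_rank Q delta a = n - 1" using assms(4) by blast
  define f where "f = (\<lambda>r. delta r a)"
  have cf: "card (f ` Q) = n - 1" using a(2) unfolding letter_rank_def f_def by simp
  have fQ: "f ` Q \<subseteq> Q" unfolding f_def using cl a(1) by auto
  have "\<not> inj_on f Q"
  proof
    assume "inj_on f Q"
    then have "card (f ` Q) = n" using card_image assms(2) by metis
    then show False using cf assms(3) by simp
  qed
  then obtain p q where pq: "p \<in> Q" "q \<in> Q" "p \<noteq> q" "f p = f q" unfolding inj_on_def by blast
  have "f ` Q \<noteq> Q" using cf assms(2,3) by auto
  then obtain y where y: "y \<in> Q" "y \<notin> f ` Q" using fQ by blast
  define x where "x = f p"
  have xQ: "x \<in> Q" using fQ pq unfolding x_def by blast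
  have xy: "x \<noteq> y" using y pq unfolding x_def by blast
  interpret L Q Sig delta x y
    by unfold_locales (use finQ cl assms xQ y xy in auto)
  have imgQ: "f ` Q = Q - {y}"
  proof (rule card_subset_eq)
    show "finite (Q - {y})" using finQ by simp
    show "f ` Q \<subseteq> Q - {y}" using fQ y by blast
    show "card (f ` Q) = card (Q - {y})" using cf assms(2) y finQ by (simp add: card_Diff_singleton)
  qed
  define pre where "pre w S = {r\<in>Q. delta_word delta r w \<in> S}" for w S
  have pre_sub0: "pre w S \<subseteq> Q" for w S unfolding pre_def by blast
  have ext: "card T' < card {r\<in>Q. f r \<in> T'}" if T': "T' \<subseteq> Q" "x \<in> T'" "y \<notin> T'" for T'
  proof -
    define A where "A = {r\<in>Q. f r \<in> T'}"
    have "f ` A = T'"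
    proof
      show "f ` A \<subseteq> T'" unfolding A_def by blast
      show "T' \<subseteq> f ` A"
      proof
        fix t assume "t \<in> T'"
        then have "t \<in> f ` Q" using imgQ T' by blast
        then obtain r where "r \<in> Q" "t = f r" by blast
        then show "t \<in> f ` A" unfolding A_def using \<open>t \<in> T'\<close> by blast
      qed
    qed
    moreover have "\<not> inj_on f A"
    proof -
      have "p \<in> A" "q \<in> A" unfolding A_def using pq T' x_def by auto
      then show ?thesis using pq unfolding inj_on_def by blast
    qed
    moreover have "finite A" unfolding A_def using finQ by simp
    ultimately have "card (f ` A) \<noteq> card A" "card (f ` A) \<le> card A"
      using inj_on_iff_eq_card card_image_le by blast+
    then have "card (f ` A) < card A" by simp
    then show ?thesis using \<open>f ` A = T'\<close> unfolding A_def by simp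
  qed
  have preh: "card (pre h T) = card T" if h: "h \<in> W m" and T: "T \<subseteq> Q" for h m T
  proof -
    have b: "bij_betw (\<lambda>r. delta_word delta r h) Q Q" using dw_bij h unfolding W_def by blast
    have "inj_on (\<lambda>r. delta_word delta r h) (pre h T)"
      using b pre_sub0 unfolding bij_betw_def by (rule inj_on_subset[OF conjunct1])
    moreover have "(\<lambda>r. delta_word delta r h) ` (pre h T) = T"
    proof
      show "(\<lambda>r. delta_word delta r h) ` (pre h T) \<subseteq> T" unfolding pre_def by blast
      show "T \<subseteq> (\<lambda>r. delta_word delta r h) ` (pre h T)"
      proof
        fix t assume "t \<in> T"
        then have "t \<in> (\<lambda>r. delta_word delta r h) ` Q" using b T unfolding bij_betw_def by blast
        then obtain r where "r \<in> Q" "t = delta_word delta r h" by blast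
        then show "t \<in> (\<lambda>r. delta_word delta r h) ` (pre h T)" unfolding pre_def using \<open>t \<in> T\<close> by blast
      qed
    qed
    ultimately show ?thesis using card_image by fastforce
  qed
  have pre_cons: "pre (a # h @ w) S = {r\<in>Q. f r \<in> pre h (pre w S)}" if "set h \<subseteq> Sig" for h w S
  proof -
    have "f r \<in> Q \<and> delta_word delta (f r) h \<in> Q" if "r \<in> Q" for r
      using fQ that dw_in \<open>set h \<subseteq> Sig\<close> by blast
    then show ?thesis unfolding pre_def by (auto simp: dw_append f_def)
  qed
  have pre_sub: "pre w S \<subseteq> Q" for w S unfolding pre_def by blast
  have finpre: "finite (pre w S)" for w S using pre_sub finQ by (meson finite_subset)
  have main: "\<exists>w. set w \<subseteq> Sig \<and> length w \<le> 1 + k * (2 * n - 2) \<and> k + 2 \<le> card (pre w {x})"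
    if "k + 2 \<le> n" for k
    using that
  proof (induction k)
    case 0
    have "{p,q} \<subseteq> pre [a] {x}" unfolding pre_def using pq x_def f_def by auto
    then have "card {p,q} \<le> card (pre [a] {x})" using finpre by (meson card_mono)
    then have "2 \<le> card (pre [a] {x})" using pq by simp
    then show ?case using a(1) by (intro exI[of _ "[a]"]) simp
  next
    case (Suc k)
    then obtain w where w: "set w \<subseteq> Sig" "length w \<le> 1 + k * (2 * n - 2)" "k + 2 \<le> card (pre w {x})"
      by auto
    show ?case
    proof (cases "Suc k + 2 \<le> card (pre w {x})")
      case True
      then show ?thesis using w by (intro exI[of _ w]) auto
    next
      case False
      define T where "T = pre w {x}"
      have cT: "card T = k + 2" using False w(3) unfolding T_def by simp
      have TQ: "T \<subseteq> Q" unfolding T_def by (rule pre_sub)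
      have "T \<noteq> Q" using cT Suc.prems assms(2) by auto
      moreover have "T \<noteq> {}" using cT by auto
      ultimately obtain h where h: "h \<in> W (2 * card Q - 3)" "delta_word delta x h \<in> T" "delta_word delta y h \<notin> T"
        using cross TQ by blast
      have hS: "set h \<subseteq> Sig" using W_sig h(1) by blast
      have xin: "x \<in> pre h T" unfolding pre_def using xQ h by blast
      have yout: "y \<notin> pre h T" unfolding pre_def using h by blast
      have "card (pre h T) < card {r\<in>Q. f r \<in> pre h T}" by (rule ext[OF pre_sub xin yout])
      moreover have "card (pre h T) = card T" using preh[OF h(1) TQ] .
      moreover have "pre (a # h @ w) {x} = {r\<in>Q. f r \<in> pre h T}" using pre_cons[OF hS] unfolding T_def by blast
      ultimately have c2: "Suc k + 2 \<le> card (pre (a # h @ w) {x})" using cT by simp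
      have "length h \<le> 2 * n - 3" using h(1) assms(2) unfolding W_def by simp
      then have "length (a # h @ w) \<le> 1 + Suc k * (2 * n - 2)" using w(2) assms(3) by simp
      moreover have "set (a # h @ w) \<subseteq> Sig" using a(1) hS w(1) by simp
      ultimately show ?thesis using c2 by blast
    qed
  qed
  have n2: "n - 2 + 2 \<le> n" using assms(3) by simp
  obtain w where w: "set w \<subseteq> Sig" "length w \<le> 1 + (n - 2) * (2 * n - 2)" "n - 2 + 2 \<le> card (pre w {x})"
    using main[OF n2] by blast
  have w3: "n \<le> card (pre w {x})" using w(3) n2 assms(3) by simp
  have "pre w {x} = Q" using w3 pre_sub finQ assms(2) by (meson card_seteq)
  then have "\<forall>r\<in>Q. delta_word delta r w = x" unfolding pre_def by blast
  moreover have "Q \<noteq> {}" using assms(2,3) by auto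
  ultimately have "image_word delta Q w = {x}" unfolding image_word_def by auto
  then have cw: "card (image_word delta Q w) = 1" by simp
  have sync: "synchronizing Q Sig delta" unfolding synchronizing_def using w(1) cw by blast
  have "reset_threshold Q Sig delta \<le> length w"
    unfolding reset_threshold_def using w(1) cw by (intro Least_le) blast
  moreover have "1 + (n - 2) * (2 * n - 2) = 2 * n ^ 2 + 5 - 6 * n"
  proof -
    obtain k where k: "n = k + 2" using assms(3) by (metis add.commute le_Suc_ex)
    show ?thesis unfolding k by (simp add: power2_eq_square algebra_simps)
  qed
  ultimately show ?thesis using sync w(2) by simp
qed

end
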